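(* Let $v_1,v_2\in L_2(0,1)$ be complex-valued, and for $\psi\in W_2^1(0,1)$ define $$A\psi(x)=i\psi'(x)+v_1(x)\Big[\psi(0)-\tfrac{i}{2}\langle\psi,v_1\rangle\Big]+v_2(x)\Big[\psi(1)+\tfrac{i}{2}\langle\psi,v_2\rangle\Big].$$ Then for all $\psi,\varphi\in W_2^1(0,1)$, $$\langle A\psi,\varphi\rangle-\langle\psi,A\varphi\rangle=i\Big\{\big[\psi(1)+i\langle\psi,v_2\rangle\big]\overline{\big[\varphi(1)+i\langle\varphi,v_2\rangle\big]}-\big[\psi(0)-i\langle\psi,v_1\rangle\big]\overline{\big[\varphi(0)-i\langle\varphi,v_1\rangle\big]}\Big\}.$$
   Context: $\langle f,g\rangle=\int_0^1 f(x)\overline{g(x)}\,dx$ is the inner product of $L_2(0,1)$; $W_2^1(0,1)$ is the Sobolev space. *)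

theory Defs
  imports "HOL-Analysis.Analysis"
begin

definition L2_01 :: "(real \<Rightarrow> complex) set" where
  "L2_01 = {f. f measurable_on {0..1} \<and> (\<lambda>x. (cmod (f x))^2) integrable_on {0..1}}"

definition ip01 :: "(real \<Rightarrow> complex) \<Rightarrow> (real \<Rightarrow> complex) \<Rightarrow> complex" where
  "ip01 f g = integral {0..1} (\<lambda>x. f x * cnj (g x))"

text \<open>psi is (the absolutely continuous representative of) an element of W_2^1(0,1)
  with weak derivative dpsi in L2(0,1).\<close>
definition W21_with_deriv :: "(real \<Rightarrow> complex) \<Rightarrow> (real \<Rightarrow> complex) \<Rightarrow> bool" where
  "W21_with_deriv psi dpsi \<longleftrightarrow> dpsi \<in> L2_01 \<and>
     (\<forall>x\<in>{0..1}. psi x = psi 0 + integral {0..x} dpsi)"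

definition opA :: "(real \<Rightarrow> complex) \<Rightarrow> (real \<Rightarrow> complex) \<Rightarrow> (real \<Rightarrow> complex)
    \<Rightarrow> (real \<Rightarrow> complex) \<Rightarrow> real \<Rightarrow> complex" where
  "opA v1 v2 psi dpsi x = \<i> * dpsi x
     + v1 x * (psi 0 - (\<i> / 2) * ip01 psi v1)
     + v2 x * (psi 1 + (\<i> / 2) * ip01 psi v2)"

end

theory Submission
  imports Defs
begin

lemma sigma_finite_lebesgue: "sigma_finite_measure (lebesgue :: real measure)"
proof
  let ?A = "range (\<lambda>n::nat. {-real n..real n})"
  show "\<exists>A. countable A \<and> A \<subseteq> sets (lebesgue::real measure) \<and> \<Union> A = space (lebesgue::real measure) \<and> (\<forall>a\<in>A. emeasure (lebesgue::real measure) a \<noteq> \<infinity>)"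
  proof (intro exI[where x="range (\<lambda>n::nat. {-real n..real n})"] conjI)
    show "countable ?A" by simp
    show "?A \<subseteq> sets lebesgue" by auto
    show "\<forall>a\<in>?A. emeasure lebesgue a \<noteq> \<infinity>"
      by auto
    show "\<Union> ?A = space lebesgue"
    proof (auto)
      fix x :: real
      obtain n :: nat where "\<bar>x\<bar> \<le> n" using real_nat_ceiling_ge by blast
      then show "\<exists>n::nat. - real n \<le> x \<and> x \<le> real n" by (intro exI[of _ n]) auto
    qed
  qed
qed

interpretation leb_pair: pair_sigma_finite "lebesgue :: real measure" "lebesgue :: real measure"
  by (simp add: pair_sigma_finite.intro sigma_finite_lebesgue)

lemma id_leb_meas[measurable]: "(\<lambda>x::real. x) \<in> borel_measurable lebesgue"
  using measurable_completion[of "\<lambda>x::real. x" lborel borel] by simp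

lemma
  fixes F H :: "real \<Rightarrow> complex"
  assumes [measurable]: "F \<in> borel_measurable lebesgue" "H \<in> borel_measurable lebesgue"
  shows "(\<lambda>(x,t). if t \<le> x then F x * H t else 0) \<in> borel_measurable (lebesgue \<Otimes>\<^sub>M lebesgue)"
proof -
  have [measurable]: "(\<lambda>p::real\<times>real. fst p) \<in> borel_measurable (lebesgue \<Otimes>\<^sub>M lebesgue)"
    "(\<lambda>p::real\<times>real. snd p) \<in> borel_measurable (lebesgue \<Otimes>\<^sub>M lebesgue)"
    using measurable_compose[OF measurable_fst id_leb_meas] measurable_compose[OF measurable_snd id_leb_meas] by auto
  show ?thesis unfolding case_prod_beta by measurable
qed


lemma core_ibp:
  fixes f h :: "real \<Rightarrow> complex"
  assumes f: "f absolutely_integrable_on {0..1}" and h: "h absolutely_integrable_on {0..1}"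
  shows "integral {0..1} (\<lambda>x. f x * integral {0..x} h) + integral {0..1} (\<lambda>t. integral {0..t} f * h t)
     = integral {0..1} f * integral {0..1} h"
proof -
  define F1 where "F1 = (\<lambda>x. indicator {0..1::real} x *\<^sub>R f x)"
  define H1 where "H1 = (\<lambda>x. indicator {0..1::real} x *\<^sub>R h x)"
  have F1i: "integrable lebesgue F1" using f unfolding F1_def set_integrable_def .
  have H1i: "integrable lebesgue H1" using h unfolding H1_def set_integrable_def .
  have [measurable]: "F1 \<in> borel_measurable lebesgue" "H1 \<in> borel_measurable lebesgue"
    using F1i H1i by auto
  have [measurable]: "(\<lambda>p::real\<times>real. fst p) \<in> borel_measurable (lebesgue \<Otimes>\<^sub>M lebesgue)"
    "(\<lambda>p::real\<times>real. snd p) \<in> borel_measurable (lebesgue \<Otimes>\<^sub>M lebesgue)"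
    using measurable_compose[OF measurable_fst id_leb_meas] measurable_compose[OF measurable_snd id_leb_meas] by auto
  define k where "k = (\<lambda>x t. if t \<le> x then F1 x * H1 t else 0)"
  have kmeas[measurable]: "case_prod k \<in> borel_measurable (lebesgue \<Otimes>\<^sub>M lebesgue)"
    unfolding k_def case_prod_beta by measurable
  have gint: "integrable (lebesgue \<Otimes>\<^sub>M lebesgue) (\<lambda>(x,t). F1 x * H1 t)"
  proof (rule leb_pair.Fubini_integrable)
    show "(\<lambda>(x,t). F1 x * H1 t) \<in> borel_measurable (lebesgue \<Otimes>\<^sub>M lebesgue)"
      unfolding case_prod_beta by measurable
    have "integrable lebesgue (\<lambda>x. norm (F1 x) * (\<integral>t. norm (H1 t) \<partial>lebesgue))"
      using F1i by auto
    then show "integrable lebesgue (\<lambda>x. \<integral>t. norm (case (x, t) of (x, t) \<Rightarrow> F1 x * H1 t) \<partial>lebesgue)"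
      by (simp add: norm_mult)
    show "AE x in lebesgue. integrable lebesgue (\<lambda>t. case (x, t) of (x, t) \<Rightarrow> F1 x * H1 t)"
      using H1i by auto
  qed
  have kint: "integrable (lebesgue \<Otimes>\<^sub>M lebesgue) (case_prod k)"
    by (rule Bochner_Integration.integrable_bound[OF gint kmeas]) (auto simp: k_def norm_mult)
  have Fub: "(\<integral>t. (\<integral>x. k x t \<partial>lebesgue) \<partial>lebesgue) = (\<integral>x. (\<integral>t. k x t \<partial>lebesgue) \<partial>lebesgue)"
    by (rule leb_pair.Fubini_integral[OF kint])
  have hsub: "set_integrable lebesgue {0..x} h" if "x \<le> 1" for x
    using absolutely_integrable_on_subinterval[OF h, of 0 x] that by auto
  have fsub: "set_integrable lebesgue {t..1} f" if "0 \<le> t" for t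
    using absolutely_integrable_on_subinterval[OF f, of t 1] that by auto
  have A: "(\<integral>t. k x t \<partial>lebesgue) = indicator {0..1} x *\<^sub>R (f x * integral {0..x} h)" for x
  proof -
    have "(\<integral>t. k x t \<partial>lebesgue) = (\<integral>t. F1 x * (indicator {..x} t *\<^sub>R H1 t) \<partial>lebesgue)"
      by (rule Bochner_Integration.integral_cong) (auto simp: k_def split: split_indicator)
    also have "\<dots> = F1 x * (\<integral>t. indicator {..x} t *\<^sub>R H1 t \<partial>lebesgue)"
      by (rule integral_mult_right_zero)
    also have "\<dots> = indicator {0..1} x *\<^sub>R (f x * integral {0..x} h)"
    proof (cases "x \<in> {0..1}")
      case True
      have "(\<integral>t. indicator {..x} t *\<^sub>R H1 t \<partial>lebesgue) = (LINT t:{0..x}|lebesgue. h t)"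
        unfolding set_lebesgue_integral_def
        by (rule Bochner_Integration.integral_cong) (use True in \<open>auto simp: H1_def split: split_indicator\<close>)
      also have "\<dots> = integral {0..x} h"
        using set_lebesgue_integral_eq_integral(2)[OF hsub] True by auto
      finally show ?thesis using True by (simp add: F1_def)
    next
      case False
      then show ?thesis by (simp add: F1_def)
    qed
    finally show ?thesis .
  qed
  have B: "(\<integral>x. k x t \<partial>lebesgue) = indicator {0..1} t *\<^sub>R (h t * (integral {0..1} f - integral {0..t} f))" for t
  proof -
    have "(\<integral>x. k x t \<partial>lebesgue) = (\<integral>x. H1 t * (indicator {t..} x *\<^sub>R F1 x) \<partial>lebesgue)"
      by (rule Bochner_Integration.integral_cong) (auto simp: k_def split: split_indicator)
    also have "\<dots> = H1 t * (\<integral>x. indicator {t..} x *\<^sub>R F1 x \<partial>lebesgue)"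
      by (rule integral_mult_right_zero)
    also have "\<dots> = indicator {0..1} t *\<^sub>R (h t * (integral {0..1} f - integral {0..t} f))"
    proof (cases "t \<in> {0..1}")
      case True
      have "(\<integral>x. indicator {t..} x *\<^sub>R F1 x \<partial>lebesgue) = (LINT x:{t..1}|lebesgue. f x)"
        unfolding set_lebesgue_integral_def
        by (rule Bochner_Integration.integral_cong) (use True in \<open>auto simp: F1_def split: split_indicator\<close>)
      also have "\<dots> = integral {t..1} f"
        using set_lebesgue_integral_eq_integral(2)[OF fsub] True by auto
      also have "\<dots> = integral {0..1} f - integral {0..t} f"
        using Henstock_Kurzweil_Integration.integral_combine[of 0 t 1 f] True
          set_lebesgue_integral_eq_integral(1)[OF f] by (auto simp: algebra_simps)
      finally show ?thesis using True by (simp add: H1_def)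
    next
      case False
      then show ?thesis by (simp add: H1_def)
    qed
    finally show ?thesis .
  qed
  have int1: "set_integrable lebesgue {0..1} (\<lambda>x. f x * integral {0..x} h)"
    using leb_pair.integrable_fst'[OF kint[unfolded case_prod_beta]] unfolding set_integrable_def by (simp add: A)
  have int2: "set_integrable lebesgue {0..1} (\<lambda>t. h t * (integral {0..1} f - integral {0..t} f))"
    using leb_pair.integrable_snd[OF kint] unfolding set_integrable_def by (simp add: B)
  have eq: "integral {0..1} (\<lambda>t. h t * (integral {0..1} f - integral {0..t} f)) = integral {0..1} (\<lambda>x. f x * integral {0..x} h)"
    using Fub int1 int2 set_lebesgue_integral_eq_integral(2)[OF int1] set_lebesgue_integral_eq_integral(2)[OF int2]
    unfolding set_lebesgue_integral_def by (simp add: A B)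
  have hi: "h integrable_on {0..1}" and fi: "f integrable_on {0..1}"
    using set_lebesgue_integral_eq_integral(1)[OF h] set_lebesgue_integral_eq_integral(1)[OF f] by auto
  have i2: "(\<lambda>t. h t * (integral {0..1} f - integral {0..t} f)) integrable_on {0..1}"
    using set_lebesgue_integral_eq_integral(1)[OF int2] .
  have i3: "(\<lambda>t. integral {0..1} f * h t) integrable_on {0..1}"
    using hi by (rule integrable_on_mult_right)
  have "(\<lambda>t. integral {0..1} f * h t - h t * (integral {0..1} f - integral {0..t} f)) integrable_on {0..1}"
    using integrable_diff[OF i3 i2] .
  then have i4: "(\<lambda>t. integral {0..t} f * h t) integrable_on {0..1}"
    by (simp add: algebra_simps)
  have "integral {0..1} (\<lambda>t. h t * (integral {0..1} f - integral {0..t} f))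
      = integral {0..1} (\<lambda>t. integral {0..1} f * h t - integral {0..t} f * h t)"
    by (simp add: algebra_simps)
  also have "\<dots> = integral {0..1} f * integral {0..1} h - integral {0..1} (\<lambda>t. integral {0..t} f * h t)"
    using integral_diff[OF i3 i4] by simp
  finally show ?thesis using eq by simp
qed


lemma bilinear_mult_cnj: "bilinear (\<lambda>a b::complex. a * cnj b)"
  unfolding bilinear_def linear_iff by (simp add: algebra_simps)

lemma ab_sq: "cmod a * cmod b \<le> (cmod a)^2 + (cmod b)^2"
proof -
  have h: "0 \<le> (cmod a - cmod b)^2" by simp
  have h2: "0 \<le> cmod a * cmod b" by simp
  have "2 * (cmod a * cmod b) \<le> (cmod a)^2 + (cmod b)^2"
    using h by (simp add: power2_eq_square algebra_simps)
  then show ?thesis using h2 by linarith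
qed

lemma L2_prod:
  assumes f: "f \<in> L2_01" and g: "g \<in> L2_01"
  shows "(\<lambda>x. f x * cnj (g x)) absolutely_integrable_on {0..1}"
proof (rule measurable_bounded_by_integrable_imp_absolutely_integrable)
  show S: "{0..1::real} \<in> sets lebesgue" by simp
  have "(\<lambda>x. f x * cnj (g x)) measurable_on {0..1}"
    using measurable_on_bilinear[OF bilinear_mult_cnj, of f "{0..1}" g] f g by (auto simp: L2_01_def)
  then show "(\<lambda>x. f x * cnj (g x)) \<in> borel_measurable (lebesgue_on {0..1})"
    using measurable_on_iff_borel_measurable[OF S] by blast
  show "(\<lambda>x. (cmod (f x))^2 + (cmod (g x))^2) integrable_on {0..1}"
    using f g by (intro integrable_add) (auto simp: L2_01_def)
  fix x :: real
  have "cmod (f x) * cmod (g x) \<le> (cmod (f x))^2 + (cmod (g x))^2"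
    by (rule ab_sq)
  then show "norm (f x * cnj (g x)) \<le> (cmod (f x))^2 + (cmod (g x))^2"
    by (simp add: norm_mult)
qed

lemma const1_L2: "(\<lambda>x. 1) \<in> L2_01"
  unfolding L2_01_def by auto

lemma L2_L1: "f \<in> L2_01 \<Longrightarrow> f absolutely_integrable_on {0..1}"
  using L2_prod[OF _ const1_L2, of f] by simp

lemma L2_L1_cnj: "f \<in> L2_01 \<Longrightarrow> (\<lambda>x. cnj (f x)) absolutely_integrable_on {0..1}"
  using L2_prod[OF const1_L2, of f] by simp

lemma L2_int: "f \<in> L2_01 \<Longrightarrow> g \<in> L2_01 \<Longrightarrow> (\<lambda>x. f x * cnj (g x)) integrable_on {0..1}"
  using L2_prod set_lebesgue_integral_eq_integral(1) by blast

lemma cont_L2: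
  assumes "continuous_on {0..1} f"
  shows "f \<in> L2_01"
proof -
  have S: "{0..1::real} \<in> sets lebesgue" by simp
  have "f measurable_on {0..1}"
    using measurable_on_iff_borel_measurable[OF S] continuous_imp_measurable_on_sets_lebesgue[OF assms S] by blast
  moreover have "(\<lambda>x. (cmod (f x))^2) integrable_on {0..1}"
    by (intro integrable_continuous_interval continuous_intros assms)
  ultimately show ?thesis unfolding L2_01_def by blast
qed

lemma W21_cont:
  assumes "W21_with_deriv psi dpsi"
  shows "continuous_on {0..1} psi"
proof -
  have "dpsi integrable_on {0..1}"
    using assms L2_L1 set_lebesgue_integral_eq_integral(1) unfolding W21_with_deriv_def by blast
  then have "continuous_on {0..1} (\<lambda>x. psi 0 + integral {0..x} dpsi)"
    by (intro continuous_intros indefinite_integral_continuous_1)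
  moreover have "\<And>x. x \<in> {0..1} \<Longrightarrow> psi 0 + integral {0..x} dpsi = psi x"
    using assms unfolding W21_with_deriv_def by (metis (no_types, lifting))
  ultimately show ?thesis
    by (rule continuous_on_eq)
qed

lemma W21_L2: "W21_with_deriv psi dpsi \<Longrightarrow> psi \<in> L2_01"
  using W21_cont cont_L2 by blast

lemma ibp:
  assumes A: "W21_with_deriv psi dpsi" and B: "W21_with_deriv phi dphi"
  shows "ip01 dpsi phi + ip01 psi dphi = psi 1 * cnj (phi 1) - psi 0 * cnj (phi 0)"
proof -
  have dpsi: "dpsi \<in> L2_01" and dphi: "dphi \<in> L2_01" using A B by (auto simp: W21_with_deriv_def)
  have psi: "psi \<in> L2_01" and phi: "phi \<in> L2_01" using A B W21_L2 by auto
  define h where "h = (\<lambda>t. cnj (dphi t))"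
  have f1: "dpsi absolutely_integrable_on {0..1}" using L2_L1[OF dpsi] .
  have h1: "h absolutely_integrable_on {0..1}" using L2_L1_cnj[OF dphi] unfolding h_def .
  have fi: "dpsi integrable_on {0..1}" using f1 set_lebesgue_integral_eq_integral(1) by blast
  have hi: "h integrable_on {0..1}" using h1 set_lebesgue_integral_eq_integral(1) by blast
  have hQ: "integral {0..x} h = cnj (integral {0..x} dphi)" for x
    unfolding h_def by (simp add: integral_cnj)
  have psix: "psi x = psi 0 + integral {0..x} dpsi" if "x \<in> {0..1}" for x
    using A that unfolding W21_with_deriv_def by blast
  have phix: "phi x = phi 0 + integral {0..x} dphi" if "x \<in> {0..1}" for x
    using B that unfolding W21_with_deriv_def by blast
  have core: "integral {0..1} (\<lambda>x. dpsi x * integral {0..x} h) + integral {0..1} (\<lambda>t. integral {0..t} dpsi * h t)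
     = integral {0..1} dpsi * integral {0..1} h"
    by (rule core_ibp[OF f1 h1])
  have e1x: "dpsi x * cnj (phi x) = cnj (phi 0) * dpsi x + dpsi x * integral {0..x} h" if "x \<in> {0..1}" for x
    using phix[OF that] by (simp add: hQ algebra_simps)
  have e2x: "psi x * cnj (dphi x) = psi 0 * h x + integral {0..x} dpsi * h x" if "x \<in> {0..1}" for x
    using psix[OF that] by (simp add: h_def algebra_simps)
  have i1: "(\<lambda>x. dpsi x * cnj (phi x)) integrable_on {0..1}" using L2_int[OF dpsi phi] .
  have i2: "(\<lambda>x. psi x * cnj (dphi x)) integrable_on {0..1}" using L2_int[OF psi dphi] .
  have i1a: "(\<lambda>x. cnj (phi 0) * dpsi x) integrable_on {0..1}" using fi by (rule integrable_on_mult_right)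
  have i2a: "(\<lambda>x. psi 0 * h x) integrable_on {0..1}" using hi by (rule integrable_on_mult_right)
  have i1b: "(\<lambda>x. dpsi x * integral {0..x} h) integrable_on {0..1}"
  proof -
    have "(\<lambda>x. dpsi x * cnj (phi x) - cnj (phi 0) * dpsi x) integrable_on {0..1}"
      using integrable_diff[OF i1 i1a] .
    then show ?thesis by (rule iffD1[OF Henstock_Kurzweil_Integration.integrable_cong, rotated]) (simp add: e1x)
  qed
  have i2b: "(\<lambda>x. integral {0..x} dpsi * h x) integrable_on {0..1}"
  proof -
    have "(\<lambda>x. psi x * cnj (dphi x) - psi 0 * h x) integrable_on {0..1}"
      using integrable_diff[OF i2 i2a] .
    then show ?thesis by (rule iffD1[OF Henstock_Kurzweil_Integration.integrable_cong, rotated]) (simp add: e2x)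
  qed
  have "ip01 dpsi phi = integral {0..1} (\<lambda>x. cnj (phi 0) * dpsi x + dpsi x * integral {0..x} h)"
    unfolding ip01_def by (rule Henstock_Kurzweil_Integration.integral_cong) (simp add: e1x)
  also have "\<dots> = cnj (phi 0) * integral {0..1} dpsi + integral {0..1} (\<lambda>x. dpsi x * integral {0..x} h)"
    using integral_add[OF i1a i1b] by simp
  finally have E1: "ip01 dpsi phi = cnj (phi 0) * integral {0..1} dpsi + integral {0..1} (\<lambda>x. dpsi x * integral {0..x} h)" .
  have "ip01 psi dphi = integral {0..1} (\<lambda>x. psi 0 * h x + integral {0..x} dpsi * h x)"
    unfolding ip01_def by (rule Henstock_Kurzweil_Integration.integral_cong) (simp add: e2x)
  also have "\<dots> = psi 0 * integral {0..1} h + integral {0..1} (\<lambda>x. integral {0..x} dpsi * h x)"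
    using integral_add[OF i2a i2b] by simp
  finally have E2: "ip01 psi dphi = psi 0 * integral {0..1} h + integral {0..1} (\<lambda>x. integral {0..x} dpsi * h x)" .
  have p1: "psi 1 = psi 0 + integral {0..1} dpsi" using psix[of 1] by simp
  have q1: "cnj (phi 1) = cnj (phi 0) + integral {0..1} h" using phix[of 1] by (simp add: hQ)
  have gen: "\<And>A B P H p0 q0::complex. A + B = P*H \<Longrightarrow> (q0*P + A) + (p0*H + B) = (p0+P)*(q0+H) - p0*q0"
    by (simp add: algebra_simps)
  show ?thesis
    unfolding E1 E2 p1 q1 by (rule gen[OF core])
qed


lemma fin_alg:
  fixes D E a1 a2 b1 b2 p0 p1 q0 q1 :: complex
  assumes "D + E = p1 * cnj q1 - p0 * cnj q0"
  shows "(\<i> * D + (p0 - (\<i> / 2) * a1) * cnj b1 + (p1 + (\<i> / 2) * a2) * cnj b2)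
     - (cnj \<i> * E + cnj (q0 - (\<i> / 2) * b1) * a1 + cnj (q1 + (\<i> / 2) * b2) * a2)
    = \<i> * ((p1 + \<i> * a2) * cnj (q1 + \<i> * b2) - (p0 - \<i> * a1) * cnj (q0 - \<i> * b1))"
proof -
  have D: "D = p1 * cnj q1 - p0 * cnj q0 - E" using assms by (simp add: algebra_simps)
  show ?thesis unfolding D by (simp add: algebra_simps)
qed

lemma ip_cnj: "ip01 f g = cnj (ip01 g f)"
  unfolding ip01_def integral_cnj by (simp add: mult.commute)

theorem lemma5p1:
  fixes v1 v2 psi dpsi phi dphi :: "real \<Rightarrow> complex"
  assumes "v1 \<in> L2_01" and "v2 \<in> L2_01"
    and "W21_with_deriv psi dpsi" and "W21_with_deriv phi dphi"
  shows "ip01 (opA v1 v2 psi dpsi) phi - ip01 psi (opA v1 v2 phi dphi)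
    = \<i> * ((psi 1 + \<i> * ip01 psi v2) * cnj (phi 1 + \<i> * ip01 phi v2)
           - (psi 0 - \<i> * ip01 psi v1) * cnj (phi 0 - \<i> * ip01 phi v1))"
proof -
  note v1 = assms(1) and v2 = assms(2)
  have dpsi: "dpsi \<in> L2_01" and dphi: "dphi \<in> L2_01" using assms(3,4) by (auto simp: W21_with_deriv_def)
  have psi: "psi \<in> L2_01" and phi: "phi \<in> L2_01" using assms(3,4) W21_L2 by auto
  define c1 where "c1 = psi 0 - (\<i> / 2) * ip01 psi v1"
  define c2 where "c2 = psi 1 + (\<i> / 2) * ip01 psi v2"
  define d1 where "d1 = phi 0 - (\<i> / 2) * ip01 phi v1"
  define d2 where "d2 = phi 1 + (\<i> / 2) * ip01 phi v2"
  have opsi: "opA v1 v2 psi dpsi = (\<lambda>x. \<i> * dpsi x + v1 x * c1 + v2 x * c2)"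
    by (simp add: opA_def c1_def c2_def fun_eq_iff)
  have ophi: "opA v1 v2 phi dphi = (\<lambda>x. \<i> * dphi x + v1 x * d1 + v2 x * d2)"
    by (simp add: opA_def d1_def d2_def fun_eq_iff)
  have L: "ip01 (opA v1 v2 psi dpsi) phi = \<i> * ip01 dpsi phi + c1 * ip01 v1 phi + c2 * ip01 v2 phi"
  proof -
    have a: "(\<lambda>x. \<i> * (dpsi x * cnj (phi x))) integrable_on {0..1}"
      by (rule integrable_on_mult_right[OF L2_int[OF dpsi phi]])
    have b: "(\<lambda>x. c1 * (v1 x * cnj (phi x))) integrable_on {0..1}"
      by (rule integrable_on_mult_right[OF L2_int[OF v1 phi]])
    have c: "(\<lambda>x. c2 * (v2 x * cnj (phi x))) integrable_on {0..1}"
      by (rule integrable_on_mult_right[OF L2_int[OF v2 phi]])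
    have "ip01 (opA v1 v2 psi dpsi) phi = integral {0..1} (\<lambda>x. \<i> * (dpsi x * cnj (phi x)) + c1 * (v1 x * cnj (phi x)) + c2 * (v2 x * cnj (phi x)))"
      unfolding ip01_def opsi
      by (rule arg_cong[where f="integral {0..1}"]) (simp add: fun_eq_iff algebra_simps)
    also have "\<dots> = integral {0..1} (\<lambda>x. \<i> * (dpsi x * cnj (phi x)) + c1 * (v1 x * cnj (phi x))) + integral {0..1} (\<lambda>x. c2 * (v2 x * cnj (phi x)))"
      by (rule integral_add[OF integrable_add[OF a b] c])
    also have "\<dots> = \<i> * ip01 dpsi phi + c1 * ip01 v1 phi + c2 * ip01 v2 phi"
      unfolding ip01_def integral_add[OF a b] by simp
    finally show ?thesis .
  qed
  have R: "ip01 psi (opA v1 v2 phi dphi) = cnj \<i> * ip01 psi dphi + cnj d1 * ip01 psi v1 + cnj d2 * ip01 psi v2"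
  proof -
    have a: "(\<lambda>x. cnj \<i> * (psi x * cnj (dphi x))) integrable_on {0..1}"
      by (rule integrable_on_mult_right[OF L2_int[OF psi dphi]])
    have b: "(\<lambda>x. cnj d1 * (psi x * cnj (v1 x))) integrable_on {0..1}"
      by (rule integrable_on_mult_right[OF L2_int[OF psi v1]])
    have c: "(\<lambda>x. cnj d2 * (psi x * cnj (v2 x))) integrable_on {0..1}"
      by (rule integrable_on_mult_right[OF L2_int[OF psi v2]])
    have "ip01 psi (opA v1 v2 phi dphi) = integral {0..1} (\<lambda>x. cnj \<i> * (psi x * cnj (dphi x)) + cnj d1 * (psi x * cnj (v1 x)) + cnj d2 * (psi x * cnj (v2 x)))"
      unfolding ip01_def ophi
      by (rule arg_cong[where f="integral {0..1}"]) (simp add: fun_eq_iff algebra_simps)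
    also have "\<dots> = integral {0..1} (\<lambda>x. cnj \<i> * (psi x * cnj (dphi x)) + cnj d1 * (psi x * cnj (v1 x))) + integral {0..1} (\<lambda>x. cnj d2 * (psi x * cnj (v2 x)))"
      by (rule integral_add[OF integrable_add[OF a b] c])
    also have "\<dots> = cnj \<i> * ip01 psi dphi + cnj d1 * ip01 psi v1 + cnj d2 * ip01 psi v2"
      unfolding ip01_def integral_add[OF a b] by simp
    finally show ?thesis .
  qed
  show ?thesis
    unfolding L R c1_def c2_def d1_def d2_def ip_cnj[of v1 phi] ip_cnj[of v2 phi]
    by (rule fin_alg[OF ibp[OF assms(3,4)]])
qed

end
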